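(* Let $W$ be a standard one-dimensional Brownian motion, let $T>0$, and let $f:\mathbb{R}\to\mathbb{R}$ be bounded. For $\varepsilon>0$ let $Q_\varepsilon(t)=[f(\varepsilon W),\varepsilon W](t)$, $t\in[0,T]$. Suppose that ${\rm osc}_f(\delta)\le C_f\delta$ for some constant $C_f>0$ and all sufficiently small $\delta>0$. Then for every $\delta>0$, $\gamma\in(0,1)$ and $\mu\in(\gamma,1)$ there are constants $\varepsilon_{\delta,\mu}>0$ and $C_{\delta,\mu}>0$ such that \[ \mathsf{P}\Big\{\varepsilon^{-(1+\gamma)}\sup_{t\le T}|Q_\varepsilon(t)|>\delta\Big\}\le C_{\delta,\mu}\,e^{-\varepsilon^{-(1-\mu)}},\qquad \varepsilon\in(0,\varepsilon_{\delta,\mu}). \]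
   Context: The modulus of continuity of $f$ is ${\rm osc}_f(\delta)=\sup_{|t-s|<\delta}|f(s)-f(t)|$ for $\delta>0$. The quadratic covariation $[X,Y](t)$ of two processes is the limit in probability, as the mesh of partitions $0=u_0<\dots<u_m=t$ tends to $0$, of $\sum_{k}(X(u_{k+1})-X(u_k))(Y(u_{k+1})-Y(u_k))$. *)

theory Defs
  imports "HOL-Probability.Probability"
begin

definition std_brownian_motion :: "'a measure \<Rightarrow> (real \<Rightarrow> 'a \<Rightarrow> real) \<Rightarrow> bool" where
  "std_brownian_motion M W \<longleftrightarrow>
     prob_space M \<and>
     (\<forall>t. W t \<in> borel_measurable M) \<and>
     (\<forall>\<omega>\<in>space M. W 0 \<omega> = 0 \<and> continuous_on {0..} (\<lambda>t. W t \<omega>)) \<and>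
     (\<forall>s t. 0 \<le> s \<and> s < t \<longrightarrow>
        distributed M lborel (\<lambda>\<omega>. W t \<omega> - W s \<omega>) (\<lambda>x. ennreal (normal_density 0 (sqrt (t - s)) x))) \<and>
     (\<forall>(u :: nat \<Rightarrow> real) n. 0 \<le> u 0 \<and> (\<forall>k<n. u k < u (Suc k)) \<longrightarrow>
        prob_space.indep_vars M (\<lambda>_. borel) (\<lambda>k \<omega>. W (u (Suc k)) \<omega> - W (u k) \<omega>) {..<n})"

definition osc :: "(real \<Rightarrow> real) \<Rightarrow> real \<Rightarrow> real" where
  "osc f \<delta> = (SUP st \<in> {(s, t). \<bar>t - s\<bar> < \<delta>}. \<bar>f (fst st) - f (snd st)\<bar>)"

definition is_partition :: "(nat \<Rightarrow> real) \<Rightarrow> nat \<Rightarrow> real \<Rightarrow> bool" where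
  "is_partition u m t \<longleftrightarrow> u 0 = 0 \<and> u m = t \<and> (\<forall>k<m. u k < u (Suc k))"

definition cov_sum :: "(real \<Rightarrow> 'a \<Rightarrow> real) \<Rightarrow> (real \<Rightarrow> 'a \<Rightarrow> real) \<Rightarrow> (nat \<Rightarrow> real) \<Rightarrow> nat \<Rightarrow> 'a \<Rightarrow> real" where
  "cov_sum X Y u m \<omega> = (\<Sum>k<m. (X (u (Suc k)) \<omega> - X (u k) \<omega>) * (Y (u (Suc k)) \<omega> - Y (u k) \<omega>))"

text \<open>L is (a version of) the quadratic covariation [X,Y](t): the limit in probability
  of the partition sums as the mesh of the partition of [0,t] tends to 0.\<close>
definition is_quad_covariation :: "'a measure \<Rightarrow> (real \<Rightarrow> 'a \<Rightarrow> real) \<Rightarrow> (real \<Rightarrow> 'a \<Rightarrow> real) \<Rightarrow> real \<Rightarrow> ('a \<Rightarrow> real) \<Rightarrow> bool" where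
  "is_quad_covariation M X Y t L \<longleftrightarrow>
     L \<in> borel_measurable M \<and>
     (\<forall>\<eta>>0. \<forall>r>0. \<exists>d>0. \<forall>u m. is_partition u m t \<and> (\<forall>k<m. u (Suc k) - u k < d) \<longrightarrow>
        measure M {\<omega>\<in>space M. \<bar>cov_sum X Y u m \<omega> - L \<omega>\<bar> > \<eta>} < r)"

end

theory Submission
  imports Defs
begin

lemma incr_moments:
  fixes X :: "'a \<Rightarrow> real"
  assumes D: "distributed M lborel X (\<lambda>x. ennreal (normal_density 0 (sqrt h) x))" and h: "h > 0"
  shows "integrable M (\<lambda>\<omega>. X \<omega> ^ 2)" "integrable M (\<lambda>\<omega>. X \<omega> ^ 4)"
    "(\<integral>\<omega>. X \<omega> ^ 2 \<partial>M) = h" "(\<integral>\<omega>. X \<omega> ^ 4 \<partial>M) = 3 * h^2"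
proof -
  have i2: "integrable lborel (\<lambda>x. normal_density 0 (sqrt h) x * x ^ 2)"
    using integrable_normal_moment[where \<mu>=0 and \<sigma>="sqrt h" and k=2] h by simp
  have i4: "integrable lborel (\<lambda>x. normal_density 0 (sqrt h) x * x ^ 4)"
    using integrable_normal_moment[where \<mu>=0 and \<sigma>="sqrt h" and k=4] h by simp
  show "integrable M (\<lambda>\<omega>. X \<omega> ^ 2)"
    using distributed_integrable[OF D, of "\<lambda>x. x^2"] i2 by simp
  show "integrable M (\<lambda>\<omega>. X \<omega> ^ 4)"
    using distributed_integrable[OF D, of "\<lambda>x. x^4"] i4 by simp
  have "(\<integral>\<omega>. X \<omega> ^ 2 \<partial>M) = (\<integral>x. normal_density 0 (sqrt h) x * x ^ 2 \<partial>lborel)"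
    using distributed_integral[OF D, of "\<lambda>x. x^2"] by simp
  also have "\<dots> = h" using integral_normal_moment_even[where \<mu>=0 and \<sigma>="sqrt h" and k=1] h
    by (simp add: fact_numeral)
  finally show "(\<integral>\<omega>. X \<omega> ^ 2 \<partial>M) = h" .
  have "(\<integral>\<omega>. X \<omega> ^ 4 \<partial>M) = (\<integral>x. normal_density 0 (sqrt h) x * x ^ 4 \<partial>lborel)"
    using distributed_integral[OF D, of "\<lambda>x. x^4"] by simp
  also have "\<dots> = 3 * h^2" using integral_normal_moment_even[where \<mu>=0 and \<sigma>="sqrt h" and k=2] h
    by (simp add: fact_numeral power2_eq_square field_simps)
  finally show "(\<integral>\<omega>. X \<omega> ^ 4 \<partial>M) = 3 * h^2" .
qed

lemma qv_cheb:
  fixes W :: "real \<Rightarrow> 'a \<Rightarrow> real"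
  assumes BM: "std_brownian_motion M W" and t: "t > 0" and n: "n > 0" and a: "a > 0"
  shows "measure M {\<omega>\<in>space M. a \<le> \<bar>(\<Sum>k<n. (W (t * real (Suc k) / real n) \<omega> - W (t * real k / real n) \<omega>)^2) - t\<bar>}
     \<le> 2 * t^2 / (real n * a^2)"
proof -
  interpret prob_space M using BM unfolding std_brownian_motion_def by blast
  define h where "h = t / real n"
  define u where "u k = t * real k / real n" for k
  define X where "X k \<omega> = W (u (Suc k)) \<omega> - W (u k) \<omega>" for k \<omega>
  define Y where "Y k \<omega> = X k \<omega> ^ 2 - h" for k \<omega>
  have h: "h > 0" using t n by (simp add: h_def)
  have uh: "u (Suc k) - u k = h" for k using n by (simp add: u_def h_def field_simps)
  have ult: "u k < u (Suc k)" for k using uh[of k] h by simp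
  have u0: "u 0 = 0" by (simp add: u_def)
  have D: "distributed M lborel (X k) (\<lambda>x. ennreal (normal_density 0 (sqrt h) x))" for k
  proof -
    have "0 \<le> u k" using t n by (simp add: u_def)
    then have "distributed M lborel (\<lambda>\<omega>. W (u (Suc k)) \<omega> - W (u k) \<omega>)
      (\<lambda>x. ennreal (normal_density 0 (sqrt (u (Suc k) - u k)) x))"
      using BM ult[of k] unfolding std_brownian_motion_def by blast
    then show ?thesis unfolding uh X_def[abs_def] .
  qed
  have ind: "indep_vars (\<lambda>_. borel) X {..<n}"
    using BM ult u0 unfolding std_brownian_motion_def X_def[abs_def] by simp
  have measW: "W s \<in> borel_measurable M" for s using BM unfolding std_brownian_motion_def by blast
  have measX[measurable]: "X k \<in> borel_measurable M" for k unfolding X_def[abs_def] using measW by measurable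
  have measY[measurable]: "Y k \<in> borel_measurable M" for k unfolding Y_def[abs_def] by measurable
  note mom = incr_moments[OF D h]
  have intX2: "integrable M (\<lambda>\<omega>. X k \<omega> ^ 2)" for k using mom(1) .
  have intY: "integrable M (Y k)" for k unfolding Y_def[abs_def] using intX2 by auto
  have eqY2: "Y k \<omega> ^ 2 = X k \<omega> ^ 4 - 2 * h * X k \<omega> ^ 2 + h^2" for k \<omega>
    by (simp add: Y_def power2_eq_square algebra_simps power4_eq_xxxx)
  have intY2: "integrable M (\<lambda>\<omega>. Y k \<omega> ^ 2)" for k
    unfolding eqY2 using mom(1)[of k] mom(2)[of k] by auto
  have EY: "(\<integral>\<omega>. Y k \<omega> \<partial>M) = 0" for k
    unfolding Y_def using intX2[of k] mom(3)[of k] by (simp add: prob_space)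
  have EY2: "(\<integral>\<omega>. Y k \<omega> ^ 2 \<partial>M) = 2 * h^2" for k
    unfolding eqY2 using mom(1)[of k] mom(2)[of k] mom(3)[of k] mom(4)[of k]
    by (simp add: prob_space power2_eq_square)
  have indY: "indep_vars (\<lambda>_. borel) Y {..<n}"
  proof -
    have "indep_vars (\<lambda>_. borel) (\<lambda>i x. (\<lambda>y::real. y^2 - h) (X i x)) {..<n}"
      by (rule indep_vars_compose2[OF ind]) auto
    then show ?thesis unfolding Y_def by simp
  qed
  have intprod: "integrable M (\<lambda>\<omega>. Y j \<omega> * Y k \<omega>)" if "j < n" "k < n" for j k
  proof (cases "j = k")
    case True then show ?thesis using intY2[of k] by (simp add: power2_eq_square)
  next
    case False
    have "indep_vars (\<lambda>_. borel) Y {j, k}" using indep_vars_subset[OF indY] that by auto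
    then have "integrable M (\<lambda>\<omega>. \<Prod>i\<in>{j,k}. Y i \<omega>)"
      by (intro indep_vars_integrable) (auto intro: intY)
    then show ?thesis using False by simp
  qed
  have Eprod: "(\<integral>\<omega>. Y j \<omega> * Y k \<omega> \<partial>M) = (if j = k then 2 * h^2 else 0)" if "j < n" "k < n" for j k
  proof (cases "j = k")
    case True then show ?thesis using EY2[of k] by (simp add: power2_eq_square)
  next
    case False
    have "indep_vars (\<lambda>_. borel) Y {j, k}" using indep_vars_subset[OF indY] that by auto
    then have "(\<integral>\<omega>. (\<Prod>i\<in>{j,k}. Y i \<omega>) \<partial>M) = (\<Prod>i\<in>{j,k}. \<integral>\<omega>. Y i \<omega> \<partial>M)"
      by (intro indep_vars_lebesgue_integral) (auto intro: intY)
    then show ?thesis using False EY by simp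
  qed
  define F where "F \<omega> = (\<Sum>k<n. Y k \<omega>)" for \<omega>
  have measF[measurable]: "F \<in> borel_measurable M" unfolding F_def[abs_def] by measurable
  have sqF: "F \<omega> ^ 2 = (\<Sum>j<n. \<Sum>k<n. Y j \<omega> * Y k \<omega>)" for \<omega>
    unfolding F_def power2_eq_square sum_product ..
  have intF2: "integrable M (\<lambda>\<omega>. F \<omega> ^ 2)"
    unfolding sqF using intprod by (intro Bochner_Integration.integrable_sum) auto
  have EF2: "(\<integral>\<omega>. F \<omega> ^ 2 \<partial>M) = 2 * t^2 / real n"
  proof -
    have "(\<integral>\<omega>. F \<omega> ^ 2 \<partial>M) = (\<Sum>j<n. \<integral>\<omega>. (\<Sum>k<n. Y j \<omega> * Y k \<omega>) \<partial>M)"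
      unfolding sqF by (rule Bochner_Integration.integral_sum) (auto intro!: Bochner_Integration.integrable_sum intprod)
    also have "\<dots> = (\<Sum>j<n. \<Sum>k<n. \<integral>\<omega>. Y j \<omega> * Y k \<omega> \<partial>M)"
      by (intro sum.cong refl Bochner_Integration.integral_sum) (auto intro: intprod)
    also have "\<dots> = (\<Sum>j<n. \<Sum>k<n. (if j = k then 2 * h^2 else 0))"
      using Eprod by (intro sum.cong refl) auto
    also have "\<dots> = real n * (2 * h^2)" by simp
    also have "\<dots> = 2 * t^2 / real n" using n by (simp add: h_def power2_eq_square field_simps)
    finally show ?thesis .
  qed
  have Feq: "F \<omega> = (\<Sum>k<n. (W (t * real (Suc k) / real n) \<omega> - W (t * real k / real n) \<omega>)^2) - t" for \<omega>
  proof -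
    have "F \<omega> = (\<Sum>k<n. X k \<omega> ^ 2) - real n * h" unfolding F_def Y_def by (simp add: sum_subtractf)
    also have "real n * h = t" using n by (simp add: h_def)
    finally show ?thesis by (simp add: X_def u_def)
  qed
  have "measure M {\<omega>\<in>space M. \<bar>F \<omega>\<bar> \<ge> a} \<le> (\<integral>\<omega>. F \<omega> ^ 2 \<partial>M) / a^2"
    by (rule second_moment_method[OF measF intF2 a])
  then show ?thesis unfolding Feq[symmetric] EF2 by (simp add: field_simps)
qed

lemma lip_from_osc:
  fixes f :: "real \<Rightarrow> real"
  assumes f_bdd: "bounded (range f)"
    and f_osc: "\<exists>C>0. \<exists>\<delta>0>0. \<forall>\<delta>. 0 < \<delta> \<and> \<delta> < \<delta>0 \<longrightarrow> osc f \<delta> \<le> C * \<delta>"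
  shows "\<exists>L>0. \<forall>a b. \<bar>f a - f b\<bar> \<le> L * \<bar>a - b\<bar>"
proof -
  obtain B where B: "\<And>x. \<bar>f x\<bar> \<le> B" using f_bdd unfolding bounded_iff by auto
  obtain C \<delta>0 where C: "C > 0" "\<delta>0 > 0" and osc: "\<And>\<delta>. 0 < \<delta> \<Longrightarrow> \<delta> < \<delta>0 \<Longrightarrow> osc f \<delta> \<le> C * \<delta>"
    using f_osc by blast
  have B0: "0 \<le> B" using B[of 0] by simp
  define L where "L = max C (2 * B / \<delta>0)"
  have L: "L > 0" using C by (simp add: L_def)
  have "\<bar>f a - f b\<bar> \<le> L * \<bar>a - b\<bar>" for a b
  proof (cases "\<bar>a - b\<bar> < \<delta>0")
    case True
    have "\<bar>f a - f b\<bar> / C \<le> \<bar>a - b\<bar>"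
    proof (rule dense_ge_bounded[OF True])
      fix w assume w: "\<bar>a - b\<bar> < w" "w < \<delta>0"
      have bdd: "bdd_above ((\<lambda>st. \<bar>f (fst st) - f (snd st)\<bar>) ` {(s, t). \<bar>t - s\<bar> < w})"
      proof (rule bdd_aboveI2)
        fix st :: "real \<times> real"
        show "\<bar>f (fst st) - f (snd st)\<bar> \<le> 2 * B" using B[of "fst st"] B[of "snd st"] by linarith
      qed
      have "\<bar>f a - f b\<bar> \<le> osc f w"
        unfolding osc_def
        by (rule cSUP_upper2[OF bdd, of "(a, b)"]) (use w in auto)
      also have "\<dots> \<le> C * w" using osc[of w] w by linarith
      finally show "\<bar>f a - f b\<bar> / C \<le> w" using C by (simp add: field_simps)
    qed
    then have "\<bar>f a - f b\<bar> \<le> C * \<bar>a - b\<bar>" using C by (simp add: field_simps)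
    also have "\<dots> \<le> L * \<bar>a - b\<bar>" by (intro mult_right_mono) (auto simp: L_def)
    finally show ?thesis .
  next
    case False
    have "\<bar>f a - f b\<bar> \<le> 2 * B" using B[of a] B[of b] by linarith
    also have "\<dots> = (2 * B / \<delta>0) * \<delta>0" using C by simp
    also have "\<dots> \<le> (2 * B / \<delta>0) * \<bar>a - b\<bar>" using False B0 C
      by (intro mult_left_mono) auto
    also have "\<dots> \<le> L * \<bar>a - b\<bar>" by (intro mult_right_mono) (auto simp: L_def)
    finally show ?thesis .
  qed
  then show ?thesis using L by blast
qed

lemma qc_bound:
  fixes W :: "real \<Rightarrow> 'a \<Rightarrow> real" and g :: "real \<Rightarrow> real"
  assumes BM: "std_brownian_motion M W" and t: "t \<ge> 0" and L: "L > 0"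
    and Lip: "\<And>a b. \<bar>g a - g b\<bar> \<le> L * \<bar>a - b\<bar>" and c: "c > 0"
    and cov: "is_quad_covariation M (\<lambda>s \<omega>. g (c * W s \<omega>)) (\<lambda>s \<omega>. c * W s \<omega>) t Z"
  shows "{\<omega>\<in>space M. \<bar>Z \<omega>\<bar> > L * c^2 * t} \<in> null_sets M"
proof -
  interpret prob_space M using BM unfolding std_brownian_motion_def by blast
  define K where "K = L * c^2"
  have K: "K > 0" using L c by (simp add: K_def)
  have measZ[measurable]: "Z \<in> borel_measurable M" using cov unfolding is_quad_covariation_def by blast
  have measW[measurable]: "W s \<in> borel_measurable M" for s using BM unfolding std_brownian_motion_def by blast
  have contg: "continuous_on UNIV g"
    unfolding continuous_on_iff
  proof (intro ballI allI impI)
    fix x e :: real assume "0 < e"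
    then show "\<exists>d>0. \<forall>x'\<in>UNIV. dist x' x < d \<longrightarrow> dist (g x') (g x) < e"
    proof (intro exI[of _ "e / L"] conjI ballI impI)
      fix x' assume "dist x' x < e / L"
      then have "L * \<bar>x' - x\<bar> < e" using L by (simp add: dist_real_def field_simps)
      then show "dist (g x') (g x) < e" using Lip[of x' x] by (simp add: dist_real_def)
    qed (use L in auto)
  qed
  have measg[measurable]: "g \<in> borel_measurable borel" by (rule borel_measurable_continuous_onI[OF contg])
  define A where "A \<eta> = {\<omega>\<in>space M. \<bar>Z \<omega>\<bar> > K * t + 2 * \<eta>}" for \<eta>
  have Ameas: "A \<eta> \<in> sets M" for \<eta> unfolding A_def by measurable
  have A0: "measure M (A \<eta>) = 0" if \<eta>: "\<eta> > 0" for \<eta>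
  proof -
    have "measure M (A \<eta>) \<le> 2 * r" if r: "r > 0" for r
    proof -
      obtain d where d: "d > 0" and dP: "\<And>u m. is_partition u m t \<and> (\<forall>k<m. u (Suc k) - u k < d) \<Longrightarrow>
         measure M {\<omega>\<in>space M. \<bar>cov_sum (\<lambda>s \<omega>. g (c * W s \<omega>)) (\<lambda>s \<omega>. c * W s \<omega>) u m \<omega> - Z \<omega>\<bar> > \<eta>} < r"
        using cov \<eta> r unfolding is_quad_covariation_def by meson
      show ?thesis
      proof (cases "t = 0")
        case True
        have "is_partition (\<lambda>_. 0) 0 t" using True by (simp add: is_partition_def)
        then have m: "measure M {\<omega>\<in>space M. \<bar>cov_sum (\<lambda>s \<omega>. g (c * W s \<omega>)) (\<lambda>s \<omega>. c * W s \<omega>) (\<lambda>_. 0) 0 \<omega> - Z \<omega>\<bar> > \<eta>} < r"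
          using dP by blast
        have "A \<eta> \<subseteq> {\<omega>\<in>space M. \<bar>cov_sum (\<lambda>s \<omega>. g (c * W s \<omega>)) (\<lambda>s \<omega>. c * W s \<omega>) (\<lambda>_. 0) 0 \<omega> - Z \<omega>\<bar> > \<eta>}"
          using True \<eta> by (auto simp: A_def cov_sum_def)
        then have "measure M (A \<eta>) \<le> measure M {\<omega>\<in>space M. \<bar>cov_sum (\<lambda>s \<omega>. g (c * W s \<omega>)) (\<lambda>s \<omega>. c * W s \<omega>) (\<lambda>_. 0) 0 \<omega> - Z \<omega>\<bar> > \<eta>}"
          by (intro finite_measure_mono) (auto simp: cov_sum_def)
        then show ?thesis using m r by linarith
      next
        case False
        then have tp: "t > 0" using t by simp
        define a where "a = \<eta> / K"
        have a: "a > 0" using \<eta> K by (simp add: a_def)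
        obtain n :: nat where nbig: "max (t / d) (2 * t^2 / (a^2 * r)) < real n" using reals_Archimedean2 by blast
        have n: "n > 0"
        proof -
          have "0 < t / d" using tp d by simp
          moreover have "t / d \<le> max (t / d) (2 * t^2 / (a^2 * r))" by simp
          ultimately have "0 < real n" using nbig by linarith
          then show ?thesis by simp
        qed
        have mesh: "t / real n < d" using nbig n d tp by (simp add: field_simps)
        have nr: "2 * t^2 / (real n * a^2) \<le> r" using nbig n a r by (simp add: field_simps)
        define u where "u k = t * real k / real n" for k
        have part: "is_partition u n t" using n tp unfolding is_partition_def u_def
          by (auto simp: field_simps)
        have meshu: "\<forall>k<n. u (Suc k) - u k < d" using mesh n by (simp add: u_def field_simps)
        define B1 where "B1 = {\<omega>\<in>space M. \<bar>cov_sum (\<lambda>s \<omega>. g (c * W s \<omega>)) (\<lambda>s \<omega>. c * W s \<omega>) u n \<omega> - Z \<omega>\<bar> > \<eta>}"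
        define S where "S \<omega> = (\<Sum>k<n. (W (t * real (Suc k) / real n) \<omega> - W (t * real k / real n) \<omega>)^2)" for \<omega>
        define B2 where "B2 = {\<omega>\<in>space M. a \<le> \<bar>S \<omega> - t\<bar>}"
        have m1: "measure M B1 < r" unfolding B1_def using dP part meshu by blast
        have m2: "measure M B2 \<le> r" using qv_cheb[OF BM tp n a] nr unfolding B2_def S_def by linarith
        have B1m: "B1 \<in> sets M" unfolding B1_def cov_sum_def by measurable
        have B2m: "B2 \<in> sets M" unfolding B2_def S_def by measurable
        have csb: "\<bar>cov_sum (\<lambda>s \<omega>. g (c * W s \<omega>)) (\<lambda>s \<omega>. c * W s \<omega>) u n \<omega>\<bar> \<le> K * S \<omega>" for \<omega>
        proof -
          have "\<bar>cov_sum (\<lambda>s \<omega>. g (c * W s \<omega>)) (\<lambda>s \<omega>. c * W s \<omega>) u n \<omega>\<bar>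
              \<le> (\<Sum>k<n. \<bar>(g (c * W (u (Suc k)) \<omega>) - g (c * W (u k) \<omega>)) * (c * W (u (Suc k)) \<omega> - c * W (u k) \<omega>)\<bar>)"
            unfolding cov_sum_def by (rule sum_abs)
          also have "\<dots> \<le> (\<Sum>k<n. K * (W (u (Suc k)) \<omega> - W (u k) \<omega>)^2)"
          proof (rule sum_mono)
            fix k
            let ?x = "W (u (Suc k)) \<omega> - W (u k) \<omega>"
            have "\<bar>(g (c * W (u (Suc k)) \<omega>) - g (c * W (u k) \<omega>)) * (c * W (u (Suc k)) \<omega> - c * W (u k) \<omega>)\<bar>
                = \<bar>g (c * W (u (Suc k)) \<omega>) - g (c * W (u k) \<omega>)\<bar> * (c * \<bar>?x\<bar>)"
              using c by (simp add: abs_mult right_diff_distrib[symmetric])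
            also have "\<dots> \<le> (L * (c * \<bar>?x\<bar>)) * (c * \<bar>?x\<bar>)"
              using Lip[of "c * W (u (Suc k)) \<omega>" "c * W (u k) \<omega>"] c
              by (intro mult_right_mono) (auto simp: abs_mult right_diff_distrib[symmetric])
            also have "\<dots> = K * ?x^2" by (simp add: K_def power2_eq_square)
            finally show "\<bar>(g (c * W (u (Suc k)) \<omega>) - g (c * W (u k) \<omega>)) * (c * W (u (Suc k)) \<omega> - c * W (u k) \<omega>)\<bar>
                \<le> K * ?x^2" .
          qed
          also have "\<dots> = K * S \<omega>" by (simp add: S_def u_def sum_distrib_left)
          finally show ?thesis .
        qed
        have "A \<eta> \<subseteq> B1 \<union> B2"
        proof
          fix \<omega> assume w: "\<omega> \<in> A \<eta>"
          show "\<omega> \<in> B1 \<union> B2"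
          proof (rule ccontr)
            assume "\<omega> \<notin> B1 \<union> B2"
            then have n1: "\<bar>cov_sum (\<lambda>s \<omega>. g (c * W s \<omega>)) (\<lambda>s \<omega>. c * W s \<omega>) u n \<omega> - Z \<omega>\<bar> \<le> \<eta>"
              and n2: "\<bar>S \<omega> - t\<bar> < a" using w by (auto simp: A_def B1_def B2_def)
            have "K * S \<omega> < K * (t + a)" using n2 K by (intro mult_strict_left_mono) auto
            also have "\<dots> = K * t + \<eta>" using K by (simp add: a_def field_simps)
            finally show False using csb[of \<omega>] n1 w by (auto simp: A_def)
          qed
        qed
        then have "measure M (A \<eta>) \<le> measure M (B1 \<union> B2)"
          using B1m B2m by (intro finite_measure_mono) auto
        also have "\<dots> \<le> measure M B1 + measure M B2" using B1m B2m by (intro measure_subadditive) auto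
        finally show ?thesis using m1 m2 by linarith
      qed
    qed
    note * = this
    have "measure M (A \<eta>) \<le> 0"
    proof (rule ccontr)
      assume "\<not> measure M (A \<eta>) \<le> 0"
      then have "measure M (A \<eta>) / 4 > 0" by simp
      from *[OF this] show False using \<open>measure M (A \<eta>) / 4 > 0\<close> by linarith
    qed
    then show ?thesis using measure_nonneg[of M "A \<eta>"] by linarith
  qed
  have "{\<omega>\<in>space M. \<bar>Z \<omega>\<bar> > K * t} = (\<Union>j. A (1 / (2 * real (Suc j))))"
  proof (safe)
    fix \<omega> assume w: "\<omega> \<in> space M" "\<bar>Z \<omega>\<bar> > K * t"
    have pos: "\<bar>Z \<omega>\<bar> - K * t > 0" using w by simp
    obtain j :: nat where j: "1 / (\<bar>Z \<omega>\<bar> - K * t) < real j" using reals_Archimedean2 by blast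
    then have j': "1 / (\<bar>Z \<omega>\<bar> - K * t) < real (Suc j)" by simp
    have "1 / real (Suc j) < \<bar>Z \<omega>\<bar> - K * t"
      using j' pos by (simp add: divide_less_eq mult.commute)
    moreover have "2 * (1 / (2 * real (Suc j))) = 1 / real (Suc j)" by (simp add: field_simps)
    ultimately have "\<omega> \<in> A (1 / (2 * real (Suc j)))" using w unfolding A_def by auto
    then show "\<omega> \<in> (\<Union>j. A (1 / (2 * real (Suc j))))" by blast
  next
    fix \<omega> j assume "\<omega> \<in> A (1 / (2 * real (Suc j)))"
    then have a1: "\<omega> \<in> space M" and a2: "K * t + 2 * (1 / (2 * real (Suc j))) < \<bar>Z \<omega>\<bar>"
      unfolding A_def by blast+
    have "0 < 2 * (1 / (2 * real (Suc j)))" by (simp only: zero_less_mult_iff zero_less_divide_iff) simp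
    then show "\<omega> \<in> space M" "K * t < \<bar>Z \<omega>\<bar>" using a1 a2 by linarith+
  qed
  also have "\<dots> \<in> null_sets M"
    using A0 Ameas by (intro null_sets_UN) (auto simp: null_sets_def emeasure_eq_measure)
  finally show ?thesis by (simp add: K_def)
qed

theorem theorem2:
  fixes M :: "'a measure" and W :: "real \<Rightarrow> 'a \<Rightarrow> real" and T :: real
    and f :: "real \<Rightarrow> real" and Q :: "real \<Rightarrow> real \<Rightarrow> 'a \<Rightarrow> real"
  assumes BM: "std_brownian_motion M W"
    and T: "T > 0"
    and f_bdd: "bounded (range f)"
    and f_osc: "\<exists>C>0. \<exists>\<delta>0>0. \<forall>\<delta>. 0 < \<delta> \<and> \<delta> < \<delta>0 \<longrightarrow> osc f \<delta> \<le> C * \<delta>"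
    and Q_cov: "\<And>\<epsilon> t. \<epsilon> > 0 \<Longrightarrow> t \<in> {0..T} \<Longrightarrow>
       is_quad_covariation M (\<lambda>s \<omega>. f (\<epsilon> * W s \<omega>)) (\<lambda>s \<omega>. \<epsilon> * W s \<omega>) t (Q \<epsilon> t)"
    and Q_cont: "\<And>\<epsilon> \<omega>. \<epsilon> > 0 \<Longrightarrow> \<omega> \<in> space M \<Longrightarrow> continuous_on {0..T} (\<lambda>t. Q \<epsilon> t \<omega>)"
  shows "\<forall>\<delta>>0. \<forall>\<gamma>\<in>{0<..<1}. \<forall>\<mu>\<in>{\<gamma><..<1}. \<exists>\<epsilon>0>0. \<exists>C>0. \<forall>\<epsilon>. 0 < \<epsilon> \<and> \<epsilon> < \<epsilon>0 \<longrightarrow>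
     measure M {\<omega>\<in>space M. \<epsilon> powr (-(1 + \<gamma>)) * (SUP t\<in>{0..T}. \<bar>Q \<epsilon> t \<omega>\<bar>) > \<delta>}
       \<le> C * exp (- (\<epsilon> powr (-(1 - \<mu>))))"
proof (intro allI impI ballI)
  fix \<delta> \<gamma> \<mu> :: real
  assume \<delta>: "\<delta> > 0" and \<gamma>: "\<gamma> \<in> {0<..<1}" and \<mu>: "\<mu> \<in> {\<gamma><..<1}"
  interpret prob_space M using BM unfolding std_brownian_motion_def by blast
  obtain L where L: "L > 0" and Lip: "\<And>a b. \<bar>f a - f b\<bar> \<le> L * \<bar>a - b\<bar>"
    using lip_from_osc[OF f_bdd f_osc] by blast
  have g1: "0 < 1 - \<gamma>" using \<gamma> by simp
  define r where "r = \<delta> / (L * T)"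
  have r: "r > 0" using \<delta> L T by (simp add: r_def)
  define e0 where "e0 = min 1 (r powr (1 / (1 - \<gamma>)))"
  have e0: "e0 > 0" using r by (simp add: e0_def)
  have "\<forall>\<epsilon>. 0 < \<epsilon> \<and> \<epsilon> < e0 \<longrightarrow>
     measure M {\<omega>\<in>space M. \<epsilon> powr (-(1 + \<gamma>)) * (SUP t\<in>{0..T}. \<bar>Q \<epsilon> t \<omega>\<bar>) > \<delta>}
       \<le> 1 * exp (- (\<epsilon> powr (-(1 - \<mu>))))"
  proof (intro allI impI)
    fix \<epsilon> :: real assume \<epsilon>: "0 < \<epsilon> \<and> \<epsilon> < e0"
    then have \<epsilon>0: "\<epsilon> > 0" by simp
    define K where "K = L * \<epsilon>^2"
    have K: "K > 0" using L \<epsilon>0 by (simp add: K_def)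
    define N where "N q = {\<omega>\<in>space M. \<bar>Q \<epsilon> q \<omega>\<bar> > K * q}" for q
    have Nnull: "N q \<in> null_sets M" if "q \<in> {0..T}" for q
      unfolding N_def K_def
      by (rule qc_bound[OF BM _ L Lip \<epsilon>0 Q_cov[OF \<epsilon>0 that]]) (use that in auto)
    have NN: "(\<Union>q\<in>\<rat> \<inter> {0..T}. N q) \<in> null_sets M"
      by (rule null_sets_UN') (auto intro: Nnull countable_subset[OF _ countable_rat])
    have bound: "\<bar>Q \<epsilon> t \<omega>\<bar> \<le> K * T"
      if w: "\<omega> \<in> space M" "\<omega> \<notin> (\<Union>q\<in>\<rat> \<inter> {0..T}. N q)" and t: "t \<in> {0..T}" for \<omega> t
    proof (rule ccontr)
      assume "\<not> \<bar>Q \<epsilon> t \<omega>\<bar> \<le> K * T"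
      then have e: "\<bar>Q \<epsilon> t \<omega>\<bar> - K * T > 0" by simp
      obtain d where d: "d > 0" and dd: "\<And>x'. x' \<in> {0..T} \<Longrightarrow> dist x' t < d \<Longrightarrow>
          dist (Q \<epsilon> x' \<omega>) (Q \<epsilon> t \<omega>) < \<bar>Q \<epsilon> t \<omega>\<bar> - K * T"
        using Q_cont[OF \<epsilon>0 w(1)] t e unfolding continuous_on_iff by metis
      have "max 0 (t - d/2) < min T (t + d/2)" using T t d by auto
      then obtain q where q: "q \<in> \<rat>" "max 0 (t - d/2) < q" "q < min T (t + d/2)"
        using Rats_dense_in_real by blast
      have qT: "q \<in> {0..T}" using q by auto
      have "dist q t < d" using q d by (auto simp: dist_real_def)
      then have "dist (Q \<epsilon> q \<omega>) (Q \<epsilon> t \<omega>) < \<bar>Q \<epsilon> t \<omega>\<bar> - K * T" using dd qT by blast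
      then have "\<bar>Q \<epsilon> q \<omega>\<bar> > K * T" by (simp add: dist_real_def)
      moreover have "K * q \<le> K * T" using qT K by (intro mult_left_mono) auto
      ultimately have "\<omega> \<in> N q" using w(1) by (auto simp: N_def)
      then show False using w(2) q(1) qT by blast
    qed
    have key: "\<epsilon> powr (-(1 + \<gamma>)) * (K * T) < \<delta>"
    proof -
      have "\<epsilon> powr (-(1 + \<gamma>)) * (K * T) = L * T * (\<epsilon> powr (-(1 + \<gamma>)) * \<epsilon> powr 2)"
        using \<epsilon>0 by (simp add: K_def powr_realpow)
      also have "\<epsilon> powr (-(1 + \<gamma>)) * \<epsilon> powr 2 = \<epsilon> powr (1 - \<gamma>)"
        by (simp add: powr_add[symmetric])
      also have "\<epsilon> powr (1 - \<gamma>) < e0 powr (1 - \<gamma>)" using \<epsilon> g1 by (intro powr_less_mono2) auto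
      also have "e0 powr (1 - \<gamma>) \<le> (r powr (1 / (1 - \<gamma>))) powr (1 - \<gamma>)"
        using e0 g1 by (intro powr_mono2) (auto simp: e0_def)
      also have "\<dots> = r" using g1 r by (simp add: powr_powr)
      finally have "\<epsilon> powr (-(1 + \<gamma>)) * (K * T) < L * T * r" using L T by simp
      also have "L * T * r = \<delta>" using L T by (simp add: r_def)
      finally show ?thesis .
    qed
    let ?S = "{\<omega>\<in>space M. \<epsilon> powr (-(1 + \<gamma>)) * (SUP t\<in>{0..T}. \<bar>Q \<epsilon> t \<omega>\<bar>) > \<delta>}"
    have sub: "?S \<subseteq> (\<Union>q\<in>\<rat> \<inter> {0..T}. N q)"
    proof
      fix \<omega> assume wS: "\<omega> \<in> ?S"
      show "\<omega> \<in> (\<Union>q\<in>\<rat> \<inter> {0..T}. N q)"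
      proof (rule ccontr)
        assume nN: "\<omega> \<notin> (\<Union>q\<in>\<rat> \<inter> {0..T}. N q)"
        have "(SUP t\<in>{0..T}. \<bar>Q \<epsilon> t \<omega>\<bar>) \<le> K * T"
          using bound[OF _ nN] wS T by (intro cSUP_least) auto
        then have "\<epsilon> powr (-(1 + \<gamma>)) * (SUP t\<in>{0..T}. \<bar>Q \<epsilon> t \<omega>\<bar>) \<le> \<epsilon> powr (-(1 + \<gamma>)) * (K * T)"
          by (intro mult_left_mono) auto
        then show False using key wS by auto
      qed
    qed
    have "measure M ?S = 0"
    proof (cases "?S \<in> sets M")
      case True
      then have "?S \<in> null_sets M" using null_sets_subset[OF NN True sub] by blast
      then show ?thesis by (rule measure_eq_0_null_sets)
    next
      case False then show ?thesis by (rule measure_notin_sets)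
    qed
    then show "measure M ?S \<le> 1 * exp (- (\<epsilon> powr (-(1 - \<mu>))))" by simp
  qed
  then show "\<exists>\<epsilon>0>0. \<exists>C>0. \<forall>\<epsilon>. 0 < \<epsilon> \<and> \<epsilon> < \<epsilon>0 \<longrightarrow>
     measure M {\<omega>\<in>space M. \<epsilon> powr (-(1 + \<gamma>)) * (SUP t\<in>{0..T}. \<bar>Q \<epsilon> t \<omega>\<bar>) > \<delta>}
       \<le> C * exp (- (\<epsilon> powr (-(1 - \<mu>))))"
    using e0 by (intro exI[of _ e0] conjI exI[of _ 1]) auto
qed

end
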